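(* Let $a,b\geq0$ with $(a,b)\neq(0,0)$, let $u_0:\mathbb{T}^d\to[0,\infty)$ be bounded, and let $u(x,t)=\int_{\mathbb{T}^d}\Psi_{a,b}(x-y,t)u_0(y)\,dy$. Then for every $r>0$ and $\varepsilon>0$ there is $t_{r,\varepsilon}<\infty$ such that $|u(x,t)-u(y,t)|<\varepsilon$ for all $x,y\in B_r$ and all $t>t_{r,\varepsilon}$.
   Context: $\mathbb{T}^d=\mathbb{R}^d/\mathbb{Z}^d$, functions identified with their periodic extensions to $\mathbb{R}^d$; $B_r$ is the open ball in $\mathbb{R}^d$ of radius $r$ centered at $0$. For $a>0$, $b\geq0$: $\widehat{\Psi}_{a,b}(n,t)=\exp\!\Big(-t\,\frac{-b+\sqrt{b^2+16a\pi^2|n|^2}}{2a}\Big)$; for $a=0,b>0$: $\widehat{\Psi}_{0,b}(n,t)=\exp(-\tfrac tb(2\pi|n|)^2)$; and $\Psi_{a,b}(x,t)=\sum_{n\in\mathbb{Z}^d}\widehat{\Psi}_{a,b}(n,t)e^{2\pi ix\cdot n}$. *)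

theory Defs
  imports "HOL-Analysis.Analysis"
begin

definition int_lattice :: "(real ^ 'd) set" where
  "int_lattice = {n. \<forall>i. n $ i \<in> \<int>}"

definition Psi_hat :: "real \<Rightarrow> real \<Rightarrow> real ^ 'd \<Rightarrow> real \<Rightarrow> real" where
  "Psi_hat a b n t =
     (if a > 0 then exp (- t * ((- b + sqrt (b\<^sup>2 + 16 * a * pi\<^sup>2 * (norm n)\<^sup>2)) / (2 * a)))
      else exp (- (t / b) * (2 * pi * norm n)\<^sup>2))"

definition Psi :: "real \<Rightarrow> real \<Rightarrow> real ^ 'd \<Rightarrow> real \<Rightarrow> complex" where
  "Psi a b x t = (\<Sum>\<^sub>\<infinity>n\<in>int_lattice.
      complex_of_real (Psi_hat a b n t) * exp (2 * pi * \<i> * complex_of_real (x \<bullet> n)))"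

text \<open>u(x,t) = integral over T^d (= unit cube) of Psi(x-y,t) u_0(y) dy.\<close>
definition sol :: "real \<Rightarrow> real \<Rightarrow> (real ^ 'd \<Rightarrow> real) \<Rightarrow> real ^ 'd \<Rightarrow> real \<Rightarrow> complex" where
  "sol a b u0 x t = integral (cbox 0 One) (\<lambda>y. Psi a b (x - y) t * complex_of_real (u0 y))"

end

theory Submission
  imports Defs
begin


definition lam :: "real \<Rightarrow> real \<Rightarrow> real ^ 'd \<Rightarrow> real" where
  "lam a b n = (if a > 0 then (- b + sqrt (b\<^sup>2 + 16 * a * pi\<^sup>2 * (norm n)\<^sup>2)) / (2 * a)
      else (2 * pi * norm n)\<^sup>2 / b)"

lemma Psi_hat_lam: "Psi_hat a b n t = exp (- t * lam a b n)"
  by (simp add: Psi_hat_def lam_def)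

lemma lam_zero: assumes "b \<ge> 0" shows "lam a b 0 = 0"
  using assms by (simp add: lam_def)

lemma lam_nonneg: assumes "a \<ge> 0" "b \<ge> 0" shows "lam a b n \<ge> 0"
proof (cases "a > 0")
  case True
  have "sqrt (b\<^sup>2) \<le> sqrt (b\<^sup>2 + 16 * a * pi\<^sup>2 * (norm n)\<^sup>2)"
    using True by (intro real_sqrt_le_mono) simp
  then show ?thesis using True assms by (simp add: lam_def)
next
  case False then show ?thesis using assms by (simp add: lam_def)
qed

definition lc :: "real \<Rightarrow> real \<Rightarrow> real" where
  "lc a b = (if a > 0 then 8 * pi\<^sup>2 / (b + sqrt (b\<^sup>2 + 16 * a * pi\<^sup>2)) else 4 * pi\<^sup>2 / b)"

lemma lc_pos: assumes "a \<ge> 0" "b \<ge> 0" "(a, b) \<noteq> (0, 0)" shows "lc a b > 0"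
proof (cases "a > 0")
  case True
  have "sqrt (b\<^sup>2 + 16 * a * pi\<^sup>2) > 0" using True by (intro real_sqrt_gt_zero) (simp add: add_nonneg_pos)
  then have "b + sqrt (b\<^sup>2 + 16 * a * pi\<^sup>2) > 0" using assms by linarith
  then show ?thesis using True by (simp add: lc_def)
next
  case False then have "b > 0" using assms by auto
  then show ?thesis using False by (simp add: lc_def)
qed

lemma lam_ge: assumes "a \<ge> 0" "b \<ge> 0" "(a, b) \<noteq> (0, 0)" "norm n \<ge> 1"
  shows "lam a b n \<ge> lc a b * norm n"
proof (cases "a > 0")
  case True
  define N where "N = norm n"
  define s where "s = sqrt (b\<^sup>2 + 16 * a * pi\<^sup>2 * N\<^sup>2)"
  define K where "K = sqrt (b\<^sup>2 + 16 * a * pi\<^sup>2)"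
  have N1: "N \<ge> 1" using assms N_def by simp
  have s0: "s \<ge> 0" "s\<^sup>2 = b\<^sup>2 + 16 * a * pi\<^sup>2 * N\<^sup>2" unfolding s_def using True by auto
  have K0: "K > 0" unfolding K_def using True by (intro real_sqrt_gt_zero) (simp add: add_nonneg_pos)
  have "s \<le> sqrt ((N * K)\<^sup>2)"
  proof -
    have "b\<^sup>2 \<le> b\<^sup>2 * N\<^sup>2" using N1 by (simp add: mult_le_cancel_left1 one_le_power)
    then have "b\<^sup>2 + 16 * a * pi\<^sup>2 * N\<^sup>2 \<le> N\<^sup>2 * (b\<^sup>2 + 16 * a * pi\<^sup>2)" by (simp add: algebra_simps)
    also have "\<dots> = (N * K)\<^sup>2" unfolding K_def using True by (simp add: power_mult_distrib)
    finally show ?thesis unfolding s_def by (rule real_sqrt_le_mono)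
  qed
  also have "\<dots> = N * K" using N1 K0 by simp
  finally have sK: "s \<le> N * K" .
  have bN: "b \<le> N * b" using N1 assms by (simp add: mult_le_cancel_right1)
  have "16 * a * pi\<^sup>2 * N\<^sup>2 > 0" using True N1 by simp
  then have sp: "s > 0" unfolding s_def using assms by (intro real_sqrt_gt_zero) (simp add: add_nonneg_pos)
  have spb: "s + b > 0" using sp assms by simp
  have l1: "lam a b n = (s - b) / (2 * a)" using True by (simp add: lam_def s_def N_def)
  have l2: "s - b = (s\<^sup>2 - b\<^sup>2) / (s + b)" using spb by (simp add: field_simps power2_eq_square)
  have "lam a b n = (16 * a * pi\<^sup>2 * N\<^sup>2) / (s + b) / (2 * a)" using l1 l2 s0 by simp
  also have "\<dots> = (16 * a * pi\<^sup>2 * N\<^sup>2 / (2 * a)) / (s + b)" by (simp only: divide_divide_eq_left mult.commute)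
  also have "16 * a * pi\<^sup>2 * N\<^sup>2 / (2 * a) = 8 * pi\<^sup>2 * N\<^sup>2" using True by simp
  finally have eq: "lam a b n = 8 * pi\<^sup>2 * N\<^sup>2 / (s + b)" .
  have "lc a b * N = 8 * pi\<^sup>2 * N\<^sup>2 / (N * (b + K))"
    using True N1 K0 assms unfolding lc_def K_def[symmetric] by (simp add: power2_eq_square)
  also have "\<dots> \<le> 8 * pi\<^sup>2 * N\<^sup>2 / (s + b)"
    using sK bN spb N1 K0 assms apply -
    apply (rule divide_left_mono)
      apply (simp add: algebra_simps)
     apply simp
    by (intro mult_pos_pos) auto
  finally show ?thesis using eq N_def by simp
next
  case False then have "a = 0" "b > 0" using assms by auto
  have "lc a b * norm n = 4 * pi\<^sup>2 * norm n / b" using False by (simp add: lc_def)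
  also have "\<dots> \<le> 4 * pi\<^sup>2 * (norm n)\<^sup>2 / b"
    using \<open>b > 0\<close> mult_left_mono[OF assms(4) norm_ge_zero[of n]]
    by (intro divide_right_mono) (auto simp: power2_eq_square)
  also have "\<dots> = lam a b n" using False by (simp add: lam_def power_mult_distrib)
  finally show ?thesis .
qed

lemma lattice_norm: assumes "n \<in> int_lattice" "n \<noteq> 0" shows "norm n \<ge> 1"
proof -
  obtain i where i: "n $ i \<noteq> 0" using assms(2) by (metis vec_eq_iff zero_index)
  obtain k where k: "n $ i = of_int k" using assms(1) unfolding int_lattice_def by (auto elim: Ints_cases)
  have "k \<noteq> 0" using i k by auto
  then have "1 \<le> \<bar>n $ i\<bar>" using k by linarith
  also have "\<dots> \<le> norm n" by (rule component_le_norm_cart)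
  finally show ?thesis .
qed



lemma sum1d:
  fixes q :: real assumes "0 < q" "q < 1"
  shows "(\<Sum>k\<in>{-int N..int N}. q ^ nat \<bar>k\<bar>) = (1 + q - 2 * q ^ (N + 1)) / (1 - q)"
proof (induction N)
  case 0 then show ?case using assms by simp
next
  case (Suc N)
  have eq: "{-int (Suc N)..int (Suc N)} = insert (-int (Suc N)) (insert (int (Suc N)) {-int N..int N})" by auto
  have "(\<Sum>k\<in>{-int (Suc N)..int (Suc N)}. q ^ nat \<bar>k\<bar>) = 2 * q ^ (Suc N) + (\<Sum>k\<in>{-int N..int N}. q ^ nat \<bar>k\<bar>)"
    unfolding eq
  proof (subst sum.insert; simp)+
    have "nat (int N + 1) = Suc N" "nat (1 + int N) = Suc N" by auto
    then show "q ^ nat (int N + 1) + q ^ nat (1 + int N) = 2 * (q * q ^ N)" by simp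
  qed
  also have "\<dots> = (1 + q - 2 * q ^ (Suc N + 1)) / (1 - q)" unfolding Suc.IH using assms by (simp add: field_simps)
  finally show ?case .
qed

lemma summable_h:
  fixes c :: real assumes c: "c > 0"
  shows "(\<lambda>n. \<Prod>i\<in>UNIV. exp (- c * \<bar>n $ i\<bar>)) summable_on (int_lattice :: (real^'d) set)"
proof (rule nonneg_bdd_above_summable_on)
  show "\<And>x. x \<in> int_lattice \<Longrightarrow> 0 \<le> (\<Prod>i\<in>UNIV. exp (- c * \<bar>x $ i\<bar>))" by (simp add: prod_nonneg)
  define q where "q = exp (- c)"
  have q: "0 < q" "q < 1" unfolding q_def using c by auto
  define B where "B = ((1 + q) / (1 - q)) ^ CARD('d)"
  define h where "h = (\<lambda>n::real^'d. \<Prod>i\<in>UNIV. exp (- c * \<bar>n $ i\<bar>))"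
  define emb where "emb = (\<lambda>p::'d \<Rightarrow> int. (\<chi> i. real_of_int (p i)) :: real^'d)"
  have hB: "sum h F \<le> B" if F: "finite F" "F \<subseteq> int_lattice" for F
  proof -
    define N where "N = nat \<lceil>Max (insert 0 (norm ` F))\<rceil>"
    have bnd: "\<bar>n $ i\<bar> \<le> real N" if "n \<in> F" for n i
    proof -
      have "\<bar>n $ i\<bar> \<le> norm n" by (rule component_le_norm_cart)
      also have "\<dots> \<le> Max (insert 0 (norm ` F))" using F that by (intro Max_ge) auto
      also have "\<dots> \<le> real N" unfolding N_def by linarith
      finally show ?thesis .
    qed
    define P where "P = PiE UNIV (\<lambda>_::'d. {-int N..int N})"
    have finP: "finite P" unfolding P_def by (intro finite_PiE) auto
    have sub: "F \<subseteq> emb ` P"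
    proof
      fix n assume n: "n \<in> F"
      have int: "n $ i \<in> \<int>" for i using F n unfolding int_lattice_def by auto
      have fl: "real_of_int \<lfloor>n $ i\<rfloor> = n $ i" for i using int[of i] by (metis Ints_cases floor_of_int)
      have "n = emb (\<lambda>i. \<lfloor>n $ i\<rfloor>)" unfolding emb_def by (simp add: vec_eq_iff fl)
      moreover have "(\<lambda>i. \<lfloor>n $ i\<rfloor>) \<in> P" unfolding P_def
      proof (simp add: PiE_iff, intro allI conjI)
        fix i
        have "\<bar>real_of_int \<lfloor>n $ i\<rfloor>\<bar> \<le> real N" using bnd[OF n, of i] by (simp add: fl)
        then show "- int N \<le> \<lfloor>n $ i\<rfloor>" "\<lfloor>n $ i\<rfloor> \<le> int N" by linarith+
      qed
      ultimately show "n \<in> emb ` P" by blast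
    qed
    have inj: "inj_on emb P"
    proof (rule inj_onI)
      fix p p' assume "emb p = emb p'"
      then have "real_of_int (p i) = real_of_int (p' i)" for i unfolding emb_def by (metis vec_lambda_beta)
      then show "p = p'" by auto
    qed
    have "sum h F \<le> sum h (emb ` P)"
      using sub finP by (intro sum_mono2) (auto simp: h_def prod_nonneg)
    also have "\<dots> = (\<Sum>p\<in>P. h (emb p))" using inj by (simp add: sum.reindex)
    also have "\<dots> = (\<Sum>p\<in>P. \<Prod>i\<in>UNIV. q ^ nat \<bar>p i\<bar>)"
    proof (rule sum.cong[OF refl])
      fix p :: "'d \<Rightarrow> int"
      have "exp (- c * \<bar>real_of_int (p i)\<bar>) = q ^ nat \<bar>p i\<bar>" for i
      proof -
        have "\<bar>real_of_int (p i)\<bar> = real (nat \<bar>p i\<bar>)" by simp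
        then show ?thesis unfolding q_def by (simp add: exp_of_nat_mult[symmetric] mult.commute)
      qed
      then show "h (emb p) = (\<Prod>i\<in>UNIV. q ^ nat \<bar>p i\<bar>)" unfolding h_def emb_def by simp
    qed
    also have "\<dots> = (\<Prod>i\<in>(UNIV::'d set). \<Sum>k\<in>{-int N..int N}. q ^ nat \<bar>k\<bar>)"
      unfolding P_def by (rule prod_sum_PiE[symmetric]) auto
    also have "\<dots> = ((1 + q - 2 * q ^ (N + 1)) / (1 - q)) ^ CARD('d)" using sum1d[OF q] by simp
    also have "\<dots> \<le> B" unfolding B_def
    proof (rule power_mono)
      show "(1 + q - 2 * q ^ (N + 1)) / (1 - q) \<le> (1 + q) / (1 - q)"
        using q by (intro divide_right_mono) auto
      have "q ^ N \<le> 1" using q by (simp add: power_le_one)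
      then have "q * q ^ N \<le> q * 1" using q by (intro mult_left_mono) auto
      moreover have "q ^ (N + 1) = q * q ^ N" by simp
      ultimately have "0 \<le> 1 + q - 2 * q ^ (N + 1)" using q by linarith
      then show "0 \<le> (1 + q - 2 * q ^ (N + 1)) / (1 - q)" using q by simp
    qed
    finally show ?thesis .
  qed
  have "bdd_above (sum h ` {F. F \<subseteq> int_lattice \<and> finite F})"
    using hB by (intro bdd_aboveI[where M=B]) auto
  then show "bdd_above (sum (\<lambda>n::real^'d. \<Prod>i\<in>UNIV. exp (- c * \<bar>n $ i\<bar>)) ` {F. F \<subseteq> int_lattice \<and> finite F})"
    using [[show_types, show_sorts]] unfolding h_def .
qed



context
  fixes a b :: real
  assumes ab: "a \<ge> 0" "b \<ge> 0" "(a, b) \<noteq> (0, 0)"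
begin

lemma g_summable: "(\<lambda>n. exp (- lam a b n)) summable_on (int_lattice :: (real^'d) set)"
proof -
  define c where "c = lc a b / real CARD('d)"
  have lcp: "lc a b > 0" using lc_pos[OF ab] .
  have c: "c > 0" unfolding c_def using lcp by simp
  show ?thesis
  proof (rule summable_on_comparison_test[OF summable_h[OF c]])
    fix n :: "real^'d" assume n: "n \<in> int_lattice"
    show "0 \<le> exp (- lam a b n)" by simp
    have s: "(\<Sum>i\<in>UNIV. \<bar>n $ i\<bar>) \<le> real CARD('d) * norm n"
      using sum_bounded_above[of UNIV "\<lambda>i. \<bar>n $ i\<bar>" "norm n"] component_le_norm_cart by auto
    have "c * (\<Sum>i\<in>UNIV. \<bar>n $ i\<bar>) \<le> lam a b n"
    proof (cases "n = 0")
      case True then show ?thesis by (simp add: lam_zero[OF ab(2)])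
    next
      case False
      have "c * (\<Sum>i\<in>UNIV. \<bar>n $ i\<bar>) \<le> c * (real CARD('d) * norm n)"
        using s c by (intro mult_left_mono) auto
      also have "\<dots> = lc a b * norm n" unfolding c_def by simp
      also have "\<dots> \<le> lam a b n" using lam_ge[OF ab lattice_norm[OF n False]] .
      finally show ?thesis .
    qed
    then have "exp (- lam a b n) \<le> exp (\<Sum>i\<in>UNIV. - c * \<bar>n $ i\<bar>)"
      by (simp add: sum_distrib_left[symmetric] sum_negf)
    also have "\<dots> = (\<Prod>i\<in>UNIV. exp (- c * \<bar>n $ i\<bar>))" by (simp add: exp_sum)
    finally show "exp (- lam a b n) \<le> (\<Prod>i\<in>UNIV. exp (- c * \<bar>n $ i\<bar>))" .
  qed
qed

lemma gt_summable:
  assumes "t \<ge> 1" "A \<subseteq> int_lattice"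
  shows "(\<lambda>n. exp (- t * lam a b n)) summable_on (A :: (real^'d) set)"
proof (rule summable_on_comparison_test[OF summable_on_subset[OF g_summable assms(2)]])
  fix n :: "real^'d"
  have "1 * lam a b n \<le> t * lam a b n" using lam_nonneg[OF ab(1,2), of n] assms(1)
    by (intro mult_right_mono) auto
  then show "exp (- t * lam a b n) \<le> exp (- lam a b n)" by simp
qed simp

lemma term_norm:
  "norm (complex_of_real (Psi_hat a b n t) * exp (2 * pi * \<i> * complex_of_real (z \<bullet> n))) = exp (- t * lam a b n)"
  by (simp add: Psi_hat_lam norm_mult)

lemma term_abs_summable:
  assumes "t \<ge> 1" "A \<subseteq> int_lattice"
  shows "(\<lambda>n. norm (complex_of_real (Psi_hat a b n t) * exp (2 * pi * \<i> * complex_of_real (z \<bullet> n)))) summable_on (A :: (real^'d) set)"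
  unfolding term_norm using gt_summable[OF assms] .

end


context
  fixes a b :: real
  assumes ab: "a \<ge> 0" "b \<ge> 0" "(a, b) \<noteq> (0, 0)"
begin

definition "trm t (z::real^'d) n = complex_of_real (Psi_hat a b n t) * exp (2 * pi * \<i> * complex_of_real (z \<bullet> n))"

lemma Psi_trm: "Psi a b z t = infsum (trm t z) int_lattice"
  unfolding Psi_def trm_def ..

lemma trm_abs_summable: "t \<ge> 1 \<Longrightarrow> A \<subseteq> int_lattice \<Longrightarrow> (\<lambda>n. norm (trm t z n)) summable_on A"
  unfolding trm_def by (intro term_abs_summable) (use ab in auto)

lemma trm_summable: "t \<ge> 1 \<Longrightarrow> A \<subseteq> int_lattice \<Longrightarrow> trm t z summable_on A"
  by (rule abs_summable_summable, rule trm_abs_summable)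

lemma norm_trm: "norm (trm t z n) = exp (- t * lam a b n)"
  unfolding trm_def by (rule term_norm[OF ab])

lemma Psi_close:
  assumes t: "t \<ge> 1"
  shows "norm (Psi a b (z::real^'d) t - 1) \<le> exp (- (t - 1) * lc a b) * infsum (\<lambda>n. exp (- lam a b n)) (int_lattice - {0::real^'d})"
proof -
  define L where "L = (int_lattice :: (real^'d) set)"
  have 0: "0 \<in> L" unfolding L_def int_lattice_def by simp
  have LL: "L = insert 0 (L - {0})" using 0 by auto
  have "Psi a b z t = trm t z 0 + infsum (trm t z) (L - {0})"
    unfolding Psi_trm L_def[symmetric] by (subst LL, rule infsum_insert, rule trm_summable[OF t], auto simp: L_def)
  moreover have "trm t z 0 = 1" unfolding trm_def by (simp add: Psi_hat_lam lam_zero[OF ab(2)])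
  ultimately have eq: "Psi a b z t - 1 = infsum (trm t z) (L - {0})" by simp
  have "norm (Psi a b z t - 1) \<le> infsum (\<lambda>n. norm (trm t z n)) (L - {0})"
    unfolding eq by (rule norm_infsum_bound, rule trm_abs_summable[OF t]) (auto simp: L_def)
  also have "\<dots> = infsum (\<lambda>n. exp (- t * lam a b n)) (L - {0})" unfolding norm_trm ..
  also have "\<dots> \<le> infsum (\<lambda>n. exp (- (t - 1) * lc a b) * exp (- lam a b n)) (L - {0})"
  proof (rule infsum_mono)
    show "(\<lambda>n. exp (- t * lam a b n)) summable_on L - {0}" using gt_summable[OF ab t] L_def by auto
    show "(\<lambda>n. exp (- (t - 1) * lc a b) * exp (- lam a b n)) summable_on L - {0}"
      by (rule summable_on_cmult_right, rule summable_on_subset[OF g_summable[OF ab]]) (auto simp: L_def)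
    fix n assume n: "n \<in> L - {0}"
    have "lc a b * 1 \<le> lc a b * norm n"
      using lc_pos[OF ab] lattice_norm[of n] n L_def by (intro mult_left_mono) auto
    also have "\<dots> \<le> lam a b n" using lam_ge[OF ab] lattice_norm[of n] n L_def by auto
    finally have "(t - 1) * lc a b \<le> (t - 1) * lam a b n" using t by (intro mult_left_mono) auto
    then have "exp (- t * lam a b n) \<le> exp (- (t - 1) * lc a b - lam a b n)" by (simp add: algebra_simps)
    also have "\<dots> = exp (- (t - 1) * lc a b) * exp (- lam a b n)" by (simp only: diff_conv_add_uminus exp_add)
    finally show "exp (- t * lam a b n) \<le> exp (- (t - 1) * lc a b) * exp (- lam a b n)" .
  qed
  also have "\<dots> = exp (- (t - 1) * lc a b) * infsum (\<lambda>n. exp (- lam a b n)) (L - {0})"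
    by (rule infsum_cmult_right, rule summable_on_subset[OF g_summable[OF ab]]) (auto simp: L_def)
  finally show ?thesis unfolding L_def .
qed

lemma Psi_cont:
  assumes t: "t \<ge> 1"
  shows "continuous_on UNIV (\<lambda>z::real^'d. Psi a b z t)"
proof (rule uniform_limit_theorem)
  define L where "L = (int_lattice :: (real^'d) set)"
  show "\<forall>\<^sub>F F in finite_subsets_at_top L. continuous_on UNIV (\<lambda>z. sum (trm t z) F)"
    unfolding trm_def by (intro always_eventually allI continuous_intros)
  show "\<not> trivial_limit (finite_subsets_at_top L)" by (simp add: finite_subsets_at_top_neq_bot)
  show "uniform_limit UNIV (\<lambda>F z. sum (trm t z) F) (\<lambda>z. Psi a b z t) (finite_subsets_at_top L)"
  proof (rule uniform_limitI)
    fix e :: real assume e: "e > 0"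
    define gt where "gt = (\<lambda>n::real^'d. exp (- t * lam a b n))"
    define G where "G = infsum gt L"
    have sgt: "gt summable_on A" if "A \<subseteq> L" for A unfolding gt_def using gt_summable[OF ab t] that L_def by auto
    have "(sum gt \<longlongrightarrow> G) (finite_subsets_at_top L)"
      using has_sum_infsum[OF sgt[OF order_refl]] unfolding G_def has_sum_def .
    then have ev1: "\<forall>\<^sub>F F in finite_subsets_at_top L. dist (sum gt F) G < e" using e by (rule tendstoD)
    have ev2: "\<forall>\<^sub>F F in finite_subsets_at_top L. finite F \<and> F \<subseteq> L" by auto
    show "\<forall>\<^sub>F F in finite_subsets_at_top L. \<forall>z\<in>UNIV. dist (sum (trm t z) F) (Psi a b z t) < e"
      using ev1 ev2
    proof eventually_elim
      case (elim F)
      then have F: "finite F" "F \<subseteq> L" and d: "dist (sum gt F) G < e" by auto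
      have LF: "L = F \<union> (L - F)" using F by auto
      have G: "G = sum gt F + infsum gt (L - F)"
        unfolding G_def by (subst LF, subst infsum_Un_disjoint) (use F sgt in auto)
      show ?case
      proof
        fix z :: "real^'d"
        have P: "Psi a b z t = sum (trm t z) F + infsum (trm t z) (L - F)"
          unfolding Psi_trm L_def[symmetric]
          by (subst LF, subst infsum_Un_disjoint) (use F trm_summable[OF t, of "L - F" z] trm_summable[OF t, of F z] L_def in auto)
        have "dist (sum (trm t z) F) (Psi a b z t) = norm (infsum (trm t z) (L - F))"
          unfolding P dist_norm by (simp add: norm_minus_commute)
        also have "\<dots> \<le> infsum (\<lambda>n. norm (trm t z n)) (L - F)"
          by (rule norm_infsum_bound, rule trm_abs_summable[OF t]) (auto simp: L_def)
        also have "\<dots> = infsum gt (L - F)" unfolding norm_trm gt_def ..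
        also have "\<dots> = G - sum gt F" using G by simp
        also have "\<dots> < e" using d by (simp add: dist_norm abs_minus_commute)
        finally show "dist (sum (trm t z) F) (Psi a b z t) < e" .
      qed
    qed
  qed
qed

end


theorem lemma12:
  fixes a b :: real and u0 :: "real ^ 'd \<Rightarrow> real"
  assumes "a \<ge> 0" and "b \<ge> 0" and "(a, b) \<noteq> (0, 0)"
    and "\<And>x n. n \<in> int_lattice \<Longrightarrow> u0 (x + n) = u0 x"
    and "\<And>x. u0 x \<ge> 0"
    and "bounded (range u0)"
    and "u0 \<in> borel_measurable lebesgue"
  shows "\<forall>r>0. \<forall>\<epsilon>>0. \<exists>T. \<forall>x\<in>ball 0 r. \<forall>y\<in>ball 0 r. \<forall>t>T.
           cmod (sol a b u0 x t - sol a b u0 y t) < \<epsilon>"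
proof -
  note ab = assms(1,2,3)
  have main: "\<exists>T. \<forall>x y. \<forall>t>T. cmod (sol a b u0 x t - sol a b u0 y t) < \<epsilon>" if e: "\<epsilon> > 0" for \<epsilon>
  proof -
    obtain M where M: "M > 0" "\<And>x. \<bar>u0 x\<bar> \<le> M" using assms(6) unfolding bounded_pos by auto
    define S1 where "S1 = infsum (\<lambda>n. exp (- lam a b n)) (int_lattice - {0::real^'d})"
    have S1: "S1 \<ge> 0" unfolding S1_def by (rule infsum_nonneg) simp
    define c where "c = lc a b"
    have c: "c > 0" unfolding c_def using lc_pos[OF ab] .
    define K where "K = 2 * M * (S1 + 1)"
    have K: "K > 0" unfolding K_def using M S1 by simp
    define T0 where "T0 = 1 + \<bar>ln (K / \<epsilon>)\<bar> / c"
    have "\<forall>x y. \<forall>t>T0. cmod (sol a b u0 x t - sol a b u0 y t) < \<epsilon>"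
    proof (intro allI impI)
      fix x y :: "real^'d" and t :: real assume tT: "t > T0"
      have A0: "\<bar>ln (K / \<epsilon>)\<bar> / c \<ge> 0" using c by simp
      have At: "\<bar>ln (K / \<epsilon>)\<bar> / c < t - 1" using tT unfolding T0_def by linarith
      have t1: "t \<ge> 1" using A0 At by linarith
      have "\<bar>ln (K / \<epsilon>)\<bar> < (t - 1) * c" using At by (simp only: pos_divide_less_eq[OF c])
      then have "- ((t - 1) * c) < - ln (K / \<epsilon>)" by linarith
      then have "exp (- ((t - 1) * c)) < exp (- ln (K / \<epsilon>))" by (simp only: exp_less_cancel_iff)
      also have "exp (- ln (K / \<epsilon>)) = \<epsilon> / K" using K e by (simp add: exp_minus)
      finally have ex0: "exp (- (t - 1) * c) < \<epsilon> / K" by (simp only: minus_mult_left)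
      have ex: "exp (- (t - 1) * c) * K < \<epsilon>" using ex0 by (simp only: pos_less_divide_eq[OF K])
      define \<delta> where "\<delta> = exp (- (t - 1) * c) * S1"
      have cl: "norm (Psi a b z t - 1) \<le> \<delta>" for z :: "real^'d"
        unfolding \<delta>_def c_def S1_def by (rule Psi_close[OF ab t1])
      have d0: "\<delta> \<ge> 0" unfolding \<delta>_def using S1 by simp
      have B: "2 * M * \<delta> < \<epsilon>"
      proof -
        have "2 * M * \<delta> \<le> exp (- (t - 1) * c) * K" unfolding \<delta>_def K_def using M S1
          by (simp add: algebra_simps)
        then show ?thesis using ex by linarith
      qed
      let ?S = "cbox (0::real^'d) One"
      have meas: "u0 \<in> borel_measurable (lebesgue_on ?S)" by (rule measurable_restrict_space1[OF assms(7)])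
      have bou: "bounded (u0 ` ?S)" using assms(6) by (rule bounded_subset) auto
      have bil: "bilinear (\<lambda>(r::real) (z::complex). r *\<^sub>R z)"
        using bilinear_conv_bounded_bilinear bounded_bilinear_scaleR by blast
      have int: "(\<lambda>w. Psi a b (p - w) t * complex_of_real (u0 w)) integrable_on ?S" for p :: "real^'d"
      proof -
        have "continuous_on ?S (\<lambda>w. Psi a b (p - w) t)"
          by (rule continuous_on_compose2[OF Psi_cont[OF ab t1], of ?S "\<lambda>w. p - w"]) (auto intro!: continuous_intros)
        then have "(\<lambda>w. Psi a b (p - w) t) absolutely_integrable_on ?S"
          by (rule absolutely_integrable_continuous)
        then have "(\<lambda>w. u0 w *\<^sub>R Psi a b (p - w) t) absolutely_integrable_on ?S"
          using absolutely_integrable_bounded_measurable_product[OF bil meas _ bou] by auto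
        then have "(\<lambda>w. u0 w *\<^sub>R Psi a b (p - w) t) integrable_on ?S"
          by (rule set_lebesgue_integral_eq_integral(1))
        then show ?thesis by (simp add: scaleR_conv_of_real mult.commute)
      qed
      have "sol a b u0 x t - sol a b u0 y t =
          integral ?S (\<lambda>w. Psi a b (x - w) t * complex_of_real (u0 w) - Psi a b (y - w) t * complex_of_real (u0 w))"
        unfolding sol_def by (rule integral_diff[symmetric, OF int int])
      also have "cmod \<dots> \<le> (2 * M * \<delta>) * Henstock_Kurzweil_Integration.content ?S"
      proof (rule has_integral_bound)
        show "0 \<le> 2 * M * \<delta>" using M d0 by simp
        show "((\<lambda>w. Psi a b (x - w) t * complex_of_real (u0 w) - Psi a b (y - w) t * complex_of_real (u0 w))
            has_integral integral ?S (\<lambda>w. Psi a b (x - w) t * complex_of_real (u0 w) - Psi a b (y - w) t * complex_of_real (u0 w))) ?S"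
          using integrable_diff[OF int int] by (rule integrable_integral)
        fix w
        have "cmod (Psi a b (x - w) t * complex_of_real (u0 w) - Psi a b (y - w) t * complex_of_real (u0 w))
            = cmod ((Psi a b (x - w) t - 1) - (Psi a b (y - w) t - 1)) * \<bar>u0 w\<bar>"
          by (simp add: left_diff_distrib[symmetric] norm_mult)
        also have "\<dots> \<le> (\<delta> + \<delta>) * M"
        proof (rule mult_mono)
          show "cmod ((Psi a b (x - w) t - 1) - (Psi a b (y - w) t - 1)) \<le> \<delta> + \<delta>"
            using norm_triangle_ineq4[of "Psi a b (x - w) t - 1" "Psi a b (y - w) t - 1"] cl[of "x - w"] cl[of "y - w"]
            by linarith
        qed (use M d0 in auto)
        also have "\<dots> = 2 * M * \<delta>" by simp
        finally show "cmod (Psi a b (x - w) t * complex_of_real (u0 w) - Psi a b (y - w) t * complex_of_real (u0 w)) \<le> 2 * M * \<delta>" .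
      qed
      also have "\<dots> = 2 * M * \<delta>" by simp
      finally show "cmod (sol a b u0 x t - sol a b u0 y t) < \<epsilon>" using B by linarith
    qed
    then show ?thesis by blast
  qed
  show ?thesis using main by blast
qed

end
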